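(* Let $G=SU(3)\rtimes\mathbb{Z}_2$ and write $H^*(BG;\mathbb{Z}_2)=\mathbb{Z}_2[y_1,y_4,y_6]$ with $\deg y_i=i$ and $Sq^1(y_1)=y_1^2$, $Sq^1(y_4)=0$, $Sq^1(y_6)=y_1y_6$. Then the $Sq^1$-homology is $$H(H^*(BG;\mathbb{Z}_2),Sq^1)\cong\mathbb{Z}_2[y_4,y_6^2].$$
   Context: $\mathbb{Z}_2$ acts on $SU(3)$ by complex conjugation. The Steenrod square $Sq^1$ satisfies $Sq^1\circ Sq^1=0$ and acts as a derivation, so it is a differential on $H^*(BG;\mathbb{Z}_2)$; $H(\,\cdot\,,Sq^1)$ denotes its homology. Such generators $y_1,y_4,y_6$ exist (with $y_4,y_6$ restricting to the mod 2 reductions of the Chern classes $c_2,c_3$ on $BSU(3)$). *)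

theory Defs
  imports "HOL-Library.Poly_Mapping" "HOL-Library.Product_Plus" "HOL-Library.Z2"
begin

text \<open>Polynomial ring Z_2[y1,y4,y6]: finitely supported maps from exponent
  triples (a,b,c) (standing for the monomial y1^a y4^b y6^c) to the field bit = Z_2.\<close>
type_synonym P3 = "(nat \<times> nat \<times> nat) \<Rightarrow>\<^sub>0 bit"

definition y1 :: P3 where "y1 = Poly_Mapping.single (1, 0, 0) 1"
definition y4 :: P3 where "y4 = Poly_Mapping.single (0, 1, 0) 1"
definition y6 :: P3 where "y6 = Poly_Mapping.single (0, 0, 1) 1"

text \<open>Polynomial ring Z_2[u,v] in two variables (u will be sent to y4, v to y6^2).\<close>
type_synonym P2 = "(nat \<times> nat) \<Rightarrow>\<^sub>0 bit"

definition u :: P2 where "u = Poly_Mapping.single (1, 0) 1"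
definition v :: P2 where "v = Poly_Mapping.single (0, 1) 1"

end

theory Submission imports Defs begin

lemma bit_self: "(x::bit) + x = 0" by (cases x) simp_all

lemma zero3: "(0::nat,0::nat,0::nat) = 0" by (simp add: zero_prod_def)

lemma pp_self: "(p::P3) + p = 0"
proof (rule poly_mapping_eqI)
  fix k show "Poly_Mapping.lookup (p + p) k = Poly_Mapping.lookup 0 k"
    unfolding lookup_add by (simp add: bit_self)
qed


lemma update_eq_plus:
  assumes "a \<notin> Poly_Mapping.keys f"
  shows "Poly_Mapping.update a b f = f + Poly_Mapping.single a b"
  using assms by (intro poly_mapping_eqI) (auto simp: lookup_update lookup_add lookup_single in_keys_iff when_def)

lemma plus_induct:
  fixes P :: "('a \<Rightarrow>\<^sub>0 'b::monoid_add) \<Rightarrow> bool"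
  assumes "P 0" and "\<And>f a b. a \<notin> Poly_Mapping.keys f \<Longrightarrow> b \<noteq> 0 \<Longrightarrow> P f \<Longrightarrow> P (f + Poly_Mapping.single a b)"
  shows "P f"
  by (induction f rule: update_induct) (auto simp: update_eq_plus assms)

lemma mul_y1: "Poly_Mapping.single (a,b,c) 1 * y1 = Poly_Mapping.single (Suc a,b,c) 1"
  by (simp add: y1_def mult_single)
lemma mul_y4: "Poly_Mapping.single (a,b,c) 1 * y4 = Poly_Mapping.single (a,Suc b,c) 1"
  by (simp add: y4_def mult_single)
lemma mul_y6: "Poly_Mapping.single (a,b,c) 1 * y6 = Poly_Mapping.single (a,b,Suc c) 1"
  by (simp add: y6_def mult_single)
lemma mul_y1y6: "Poly_Mapping.single (a,b,c) 1 * (y1 * y6) = Poly_Mapping.single (Suc a,b,Suc c) 1"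
  by (simp add: y1_def y6_def mult_single)
lemma mul_y1sq: "Poly_Mapping.single (a,b,c) 1 * y1^2 = Poly_Mapping.single (Suc (Suc a),b,c) 1"
  by (simp add: y1_def power2_eq_square mult_single)
lemma y6sq: "y6^2 = Poly_Mapping.single (0,0,2) 1"
  by (simp add: y6_def power2_eq_square mult_single numeral_2_eq_2)

definition Dl :: "P3 \<Rightarrow> nat \<times> nat \<times> nat \<Rightarrow> bit" where
  "Dl z = (\<lambda>(a,b,c). if 0 < a \<and> odd (a - 1 + c) then Poly_Mapping.lookup z (a - 1, b, c) else 0)"

context
  fixes d :: "P3 \<Rightarrow> P3"
  assumes add: "\<And>p q. d (p + q) = d p + d q"
    and leibniz: "\<And>p q. d (p * q) = d p * q + p * d q"
    and d1: "d y1 = y1 ^ 2"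
    and d4: "d y4 = 0"
    and d6: "d y6 = y1 * y6"
begin

lemma d_zero: "d 0 = 0"
  using add[of 0 0] by (metis add_cancel_right_right add_0)

lemma d_one: "d 1 = 0"
  using leibniz[of 1 1] by (simp add: pp_self)

lemma d_mono: "d (Poly_Mapping.single (a,b,c) 1) =
   (if odd (a + c) then Poly_Mapping.single (Suc a,b,c) 1 else 0)"
proof (induction c arbitrary: a b)
  case 0
  show ?case
  proof (induction b arbitrary: a)
    case 0
    show ?case
    proof (induction a)
      case 0
      then show ?case by (simp add: d_one zero3)
    next
      case (Suc a)
      have "d (Poly_Mapping.single (Suc a,0,0) 1) = d (Poly_Mapping.single (a,0,0) 1 * y1)"
        by (simp add: mul_y1)
      also have "\<dots> = d (Poly_Mapping.single (a,0,0) 1) * y1 + Poly_Mapping.single (a,0,0) 1 * y1^2"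
        by (simp add: leibniz d1)
      finally show ?case using Suc by (auto simp: mul_y1 mul_y1sq pp_self)
    qed
  next
    case (Suc b)
    have "d (Poly_Mapping.single (a,Suc b,0) 1) = d (Poly_Mapping.single (a,b,0) 1 * y4)"
      by (simp add: mul_y4)
    also have "\<dots> = d (Poly_Mapping.single (a,b,0) 1) * y4"
      by (simp add: leibniz d4)
    finally show ?case using Suc by (auto simp: mul_y4)
  qed
next
  case (Suc c)
  have "d (Poly_Mapping.single (a,b,Suc c) 1) = d (Poly_Mapping.single (a,b,c) 1 * y6)"
    by (simp add: mul_y6)
  also have "\<dots> = d (Poly_Mapping.single (a,b,c) 1) * y6 + Poly_Mapping.single (a,b,c) 1 * (y1 * y6)"
    by (simp add: leibniz d6)
  finally show ?case using Suc by (auto simp: mul_y6 mul_y1y6 pp_self)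
qed

lemma lookup_d: "Poly_Mapping.lookup (d z) k = Dl z k"
proof (induction z arbitrary: k rule: plus_induct)
  case 1
  then show ?case by (simp add: d_zero Dl_def split: prod.splits)
next
  case (2 f a bb)
  then have bb: "bb = 1" by simp
  obtain a1 a2 a3 where a: "a = (a1,a2,a3)" by (cases a) auto
  obtain k1 k2 k3 where k: "k = (k1,k2,k3)" by (cases k) auto
  show ?case
    using 2 unfolding bb a k
    by (auto simp: add lookup_add d_mono Dl_def lookup_single when_def)
qed

end


definition phl :: "P2 \<Rightarrow> nat \<times> nat \<times> nat \<Rightarrow> bit" where
  "phl p = (\<lambda>(a,b,c). if a = 0 \<and> even c then Poly_Mapping.lookup p (b, c div 2) else 0)"

definition phi :: "P2 \<Rightarrow> P3" where "phi p = Abs_poly_mapping (phl p)"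

lemma phl_fin: "finite {x. phl p x \<noteq> 0}"
proof (rule finite_subset)
  show "{x. phl p x \<noteq> 0} \<subseteq> (\<lambda>(b,k). (0::nat, b, 2*k)) ` {k. Poly_Mapping.lookup p k \<noteq> 0}"
  proof
    fix x assume "x \<in> {x. phl p x \<noteq> 0}"
    then obtain a b c where x: "x = (a,b,c)" "a = 0" "even c" "Poly_Mapping.lookup p (b, c div 2) \<noteq> 0"
      by (cases x) (auto simp: phl_def split: if_splits)
    then show "x \<in> (\<lambda>(b,k). (0::nat, b, 2*k)) ` {k. Poly_Mapping.lookup p k \<noteq> 0}"
      by (intro image_eqI[of _ _ "(b, c div 2)"]) auto
  qed
qed (intro finite_imageI finite_lookup)

lemma two_k_iff: "(2*k = (c::nat)) = (even c \<and> k = c div 2)" by auto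

lemma lookup_phi: "Poly_Mapping.lookup (phi p) = phl p"
  unfolding phi_def by (rule lookup_Abs_poly_mapping[OF phl_fin])

lemma phi_add: "phi (p + q) = phi p + phi q"
proof (rule poly_mapping_eqI)
  fix k :: "nat \<times> nat \<times> nat" obtain a b c where "k = (a,b,c)" by (cases k)
  then show "Poly_Mapping.lookup (phi (p + q)) k = Poly_Mapping.lookup (phi p + phi q) k"
    by (simp add: lookup_phi lookup_add phl_def)
qed

lemma phi_zero: "phi 0 = 0"
  by (rule poly_mapping_eqI) (auto simp: lookup_phi phl_def)

lemma phi_single: "phi (Poly_Mapping.single (b,k) x) = Poly_Mapping.single (0,b,2*k) x"
proof (rule poly_mapping_eqI)
  fix k' :: "nat \<times> nat \<times> nat" obtain a b' c where "k' = (a,b',c)" by (cases k')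
  then show "Poly_Mapping.lookup (phi (Poly_Mapping.single (b,k) x)) k' = Poly_Mapping.lookup (Poly_Mapping.single (0,b,2*k) x) k'"
    by (cases "even c") (auto simp: lookup_phi phl_def lookup_single when_def)
qed

lemma phi_single_mult: "phi (Poly_Mapping.single k x * Poly_Mapping.single l y) = phi (Poly_Mapping.single k x) * phi (Poly_Mapping.single l y)"
  by (cases k; cases l) (simp add: mult_single phi_single algebra_simps)

lemma phi_mult1: "phi (Poly_Mapping.single k x * q) = phi (Poly_Mapping.single k x) * phi q"
proof (induction q rule: plus_induct)
  case 1
  then show ?case by (simp add: phi_zero)
next
  case (2 f a b)
  then show ?case by (simp add: distrib_left phi_add phi_single_mult)
qed

lemma phi_mult: "phi (p * q) = phi p * phi q"
proof (induction p rule: plus_induct)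
  case 1
  then show ?case by (simp add: phi_zero)
next
  case (2 f a b)
  then show ?case by (simp add: distrib_right phi_add phi_mult1)
qed

lemma phi_one: "phi 1 = 1"
  using phi_single[of 0 0 1] by (simp add: zero3 zero_prod_def[symmetric])

lemma phi_u: "phi u = y4" by (simp add: u_def y4_def phi_single)
lemma phi_v: "phi v = y6^2" by (simp add: v_def y6sq phi_single)

theorem lemma6p6:
  fixes d :: "P3 \<Rightarrow> P3"
  assumes add: "\<And>p q. d (p + q) = d p + d q"
    and leibniz: "\<And>p q. d (p * q) = d p * q + p * d q"
    and sq: "\<And>p. d (d p) = 0"
    and d1: "d y1 = y1 ^ 2"
    and d4: "d y4 = 0"
    and d6: "d y6 = y1 * y6"
  shows "\<exists>\<phi> :: P2 \<Rightarrow> P3.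
           (\<forall>p q. \<phi> (p + q) = \<phi> p + \<phi> q) \<and>
           (\<forall>p q. \<phi> (p * q) = \<phi> p * \<phi> q) \<and>
           \<phi> 1 = 1 \<and> \<phi> u = y4 \<and> \<phi> v = y6 ^ 2 \<and>
           (\<forall>p. d (\<phi> p) = 0) \<and>
           (\<forall>z. d z = 0 \<longrightarrow> (\<exists>p. z - \<phi> p \<in> range d)) \<and>
           (\<forall>p. \<phi> p \<in> range d \<longrightarrow> p = 0)"
proof -
  have ld: "\<And>z k. Poly_Mapping.lookup (d z) k = Dl z k"
    by (rule lookup_d[OF add leibniz d1 d4 d6])
  have dphi: "d (phi p) = 0" for p
  proof (rule poly_mapping_eqI)
    fix k :: "nat \<times> nat \<times> nat" obtain a b c where k: "k = (a,b,c)" by (cases k)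
    show "Poly_Mapping.lookup (d (phi p)) k = Poly_Mapping.lookup 0 k"
    proof (cases "a = 1")
      case True then show ?thesis by (simp add: k ld Dl_def lookup_phi phl_def)
    qed (simp add: k ld Dl_def lookup_phi phl_def)
  qed
  have inj: "p = 0" if "phi p \<in> range d" for p
  proof -
    from that obtain w where w: "phi p = d w" by (rule rangeE)
    show "p = 0"
    proof (rule poly_mapping_eqI)
      fix k :: "nat \<times> nat"
      obtain b c where k: "k = (b,c)" by (cases k)
      have "Poly_Mapping.lookup (phi p) (0,b,2*c) = Poly_Mapping.lookup (d w) (0,b,2*c)"
        using w by simp
      then show "Poly_Mapping.lookup p k = Poly_Mapping.lookup 0 k"
        by (simp add: k ld Dl_def lookup_phi phl_def)
    qed
  qed
  have ker: "\<exists>p. z - phi p \<in> range d" if dz: "d z = 0" for z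
  proof -
    have zodd: "Poly_Mapping.lookup z (a,b,c) = 0" if "odd (a + c)" for a b c
    proof -
      have "Poly_Mapping.lookup (d z) (Suc a,b,c) = 0" using dz by simp
      then show ?thesis using that by (simp add: ld Dl_def)
    qed
    define pf where "pf = (\<lambda>(b,k). Poly_Mapping.lookup z (0::nat,b,2*k))"
    have pfin: "finite {x. pf x \<noteq> 0}"
    proof (rule finite_subset)
      show "{x. pf x \<noteq> 0} \<subseteq> (\<lambda>(a,b,c). (b, c div 2)) ` {k. Poly_Mapping.lookup z k \<noteq> 0}"
      proof
        fix x assume "x \<in> {x. pf x \<noteq> 0}"
        then obtain b k where x: "x = (b,k)" "Poly_Mapping.lookup z (0,b,2*k) \<noteq> 0"
          by (cases x) (auto simp: pf_def)
        then show "x \<in> (\<lambda>(a,b,c). (b, c div 2)) ` {k. Poly_Mapping.lookup z k \<noteq> 0}"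
          by (intro image_eqI[of _ _ "(0,b,2*k)"]) auto
      qed
    qed (intro finite_imageI finite_lookup)
    define p where "p = Abs_poly_mapping pf"
    have lp: "Poly_Mapping.lookup p = pf" using pfin by (simp add: p_def)
    define r where "r = z - phi p"
    have lr: "Poly_Mapping.lookup r (a,b,c) = (if 0 < a then Poly_Mapping.lookup z (a,b,c) else 0)" for a b c
    proof (cases "a = 0")
      case True
      then show ?thesis
        by (cases "even c") (auto simp: r_def lookup_minus lookup_phi phl_def lp pf_def zodd)
    qed (simp add: r_def lookup_minus lookup_phi phl_def)
    define wf where "wf = (\<lambda>(a,b,c). Poly_Mapping.lookup r (Suc a,b,c))"
    have wfin: "finite {x. wf x \<noteq> 0}"
    proof (rule finite_subset)
      show "{x. wf x \<noteq> 0} \<subseteq> (\<lambda>(a,b,c). (a - 1, b, c)) ` {k. Poly_Mapping.lookup r k \<noteq> 0}"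
      proof
        fix x assume "x \<in> {x. wf x \<noteq> 0}"
        then obtain a b c where x: "x = (a,b,c)" "Poly_Mapping.lookup r (Suc a,b,c) \<noteq> 0"
          by (cases x) (auto simp: wf_def)
        then show "x \<in> (\<lambda>(a,b,c). (a - 1, b, c)) ` {k. Poly_Mapping.lookup r k \<noteq> 0}"
          by (intro image_eqI[of _ _ "(Suc a,b,c)"]) auto
      qed
    qed (intro finite_imageI finite_lookup)
    define w where "w = Abs_poly_mapping wf"
    have lw: "Poly_Mapping.lookup w = wf" using wfin by (simp add: w_def)
    have "d w = r"
    proof (rule poly_mapping_eqI)
      fix k :: "nat \<times> nat \<times> nat"
      obtain a b c where k: "k = (a,b,c)" by (cases k)
      show "Poly_Mapping.lookup (d w) k = Poly_Mapping.lookup r k"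
      proof (cases a)
        case 0
        then show ?thesis by (simp add: k ld Dl_def lr)
      next
        case (Suc a')
        then show ?thesis
          by (cases "odd (a' + c)") (auto simp: k ld Dl_def lr lw wf_def zodd)
      qed
    qed
    then have "z - phi p \<in> range d" unfolding r_def by (metis rangeI)
    then show ?thesis by blast
  qed
  show ?thesis
    apply (rule exI[of _ phi])
    using phi_add phi_mult phi_one phi_u phi_v dphi ker inj by blast
qed

end
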